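(* For every $\phi\in\mathcal{L}_{\Box\!\!\rightarrow}$, if $\vdash\phi$ in $\mathbb{N}4\mathbb{CK}$, then $\phi\in\mathsf{N4CK}$ (i.e. $\phi$ is verified at every point of every Nelsonian conditional model).
   Context: $\mathcal{L}_{\Box\!\!\rightarrow}$ is built from propositional variables with $\wedge,\vee,\to$, strong negation $\sim$, and a binary would-conditional $\Box\!\!\rightarrow$; $\phi\Diamond\!\!\rightarrow\psi$ abbreviates $\sim(\phi\Box\!\!\rightarrow\sim\psi)$. Semantics: a Nelsonian conditional model is $\mathcal{M}=(W,\leq,R,V^+,V^-)$ with $W\neq\emptyset$, $\leq$ a preorder, $V^\pm$ assigning $\leq$-upward-closed sets to variables, $R\subseteq W\times(\mathcal{P}(W)\times\mathcal{P}(W))\times W$ (write $R_{(X,Y)}(w,v)$) such that for all $X,Y$: (c1) $w\leq w'$ and $R_{(X,Y)}(w,v)$ imply $R_{(X,Y)}(w',v')$ for some $v'\geq v$; (c2) $R_{(X,Y)}(w,v)$ and $v\leq v'$ imply $R_{(X,Y)}(w',v')$ for some $w'\geq w$. Verification $\models^+$ / falsification $\models^-$: atoms by $V^\pm$; $\wedge$ verified iff both verified, falsified iff one falsified; $\vee$ dually; $\sim$ swaps $\models^+,\models^-$; $w\models^+\psi\to\chi$ iff for all $v\geq w$, $v\models^+\psi$ implies $v\models^+\chi$; $w\models^-\psi\to\chi$ iff $w\models^+\psi$ and $w\models^-\chi$; $w\models^+\psi\Box\!\!\rightarrow\chi$ iff for all $v\geq w$ and $u$ with $R_{\|\psi\|}(v,u)$,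 $u\models^+\chi$; $w\models^-\psi\Box\!\!\rightarrow\chi$ iff some $u$ has $R_{\|\psi\|}(w,u)$ and $u\models^-\chi$; $\|\psi\|=(\{w\mid w\models^+\psi\},\{w\mid w\models^-\psi\})$. Abbreviations: $\leftrightarrow$ is mutual $\to$; $\phi\Rightarrow\psi:=(\phi\to\psi)\wedge(\sim\psi\to\sim\phi)$; $\phi\Leftrightarrow\psi:=(\phi\Rightarrow\psi)\wedge(\psi\Rightarrow\phi)$. $\mathbb{N}4\mathbb{CK}$: modus ponens; positive intuitionistic axiom schemes; $\sim\sim\phi\leftrightarrow\phi$, $\sim(\phi\wedge\psi)\leftrightarrow(\sim\phi\vee\sim\psi)$, $\sim(\phi\vee\psi)\leftrightarrow(\sim\phi\wedge\sim\psi)$, $\sim(\phi\to\psi)\leftrightarrow(\phi\wedge\sim\psi)$; (A1) $((\phi\Box\!\!\rightarrow\psi)\wedge(\phi\Box\!\!\rightarrow\chi))\Leftrightarrow(\phi\Box\!\!\rightarrow(\psi\wedge\chi))$; (A2) $(\sim(\phi\Box\!\!\rightarrow\psi)\wedge(\phi\Box\!\!\rightarrow\chi))\to\sim(\phi\Box\!\!\rightarrow(\psi\vee\sim\chi))$; (A3) $((\phi\Diamond\!\!\rightarrow\psi)\to(\phi\Box\!\!\rightarrow\chi))\to(\phi\Box\!\!\rightarrow(\psi\to\chi))$; (A4) $\phi\Box\!\!\rightarrow(\psi\to\psi)$; rules: from $\phi\Leftrightarrow\psi$ infer $(\phi\Box\!\!\rightarrow\chi)\Leftrightarrow(\psi\Box\!\!\rightarrow\chi)$;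 from $\phi\leftrightarrow\psi$ infer $(\chi\Box\!\!\rightarrow\phi)\leftrightarrow(\chi\Box\!\!\rightarrow\psi)$; from $\sim\phi\leftrightarrow\sim\psi$ infer $\sim(\chi\Box\!\!\rightarrow\phi)\leftrightarrow\sim(\chi\Box\!\!\rightarrow\psi)$. *)

theory Defs
  imports Main
begin

datatype 'a fm =
    Var 'a
  | Conj "'a fm" "'a fm"
  | Disj "'a fm" "'a fm"
  | Imp "'a fm" "'a fm"
  | SNeg "'a fm"
  | Cond "'a fm" "'a fm"

definition Might :: "'a fm \<Rightarrow> 'a fm \<Rightarrow> 'a fm" where
  "Might a b = SNeg (Cond a (SNeg b))"

definition Iff :: "'a fm \<Rightarrow> 'a fm \<Rightarrow> 'a fm" where
  "Iff a b = Conj (Imp a b) (Imp b a)"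

definition SImp :: "'a fm \<Rightarrow> 'a fm \<Rightarrow> 'a fm" where
  "SImp a b = Conj (Imp a b) (Imp (SNeg b) (SNeg a))"

definition SIff :: "'a fm \<Rightarrow> 'a fm \<Rightarrow> 'a fm" where
  "SIff a b = Conj (SImp a b) (SImp b a)"

text \<open>The world set W is the carrier type 'w (nonempty automatically).
  R (X,Y) w v stands for R_(X,Y)(w,v).\<close>

record ('w, 'a) ncmodel =
  le :: "'w \<Rightarrow> 'w \<Rightarrow> bool"
  R  :: "'w set \<times> 'w set \<Rightarrow> 'w \<Rightarrow> 'w \<Rightarrow> bool"
  Vp :: "'a \<Rightarrow> 'w set"
  Vn :: "'a \<Rightarrow> 'w set"

definition upclosed :: "('w \<Rightarrow> 'w \<Rightarrow> bool) \<Rightarrow> 'w set \<Rightarrow> bool" where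
  "upclosed r S \<longleftrightarrow> (\<forall>w v. w \<in> S \<longrightarrow> r w v \<longrightarrow> v \<in> S)"

definition is_model :: "('w, 'a) ncmodel \<Rightarrow> bool" where
  "is_model M \<longleftrightarrow>
     reflp (le M) \<and> transp (le M) \<and>
     (\<forall>p. upclosed (le M) (Vp M p)) \<and>
     (\<forall>p. upclosed (le M) (Vn M p)) \<and>
     (\<forall>X Y w w' v. le M w w' \<longrightarrow> R M (X, Y) w v \<longrightarrow>
         (\<exists>v'. le M v v' \<and> R M (X, Y) w' v')) \<and>
     (\<forall>X Y w v v'. R M (X, Y) w v \<longrightarrow> le M v v' \<longrightarrow>
         (\<exists>w'. le M w w' \<and> R M (X, Y) w' v'))"

text \<open>sat True = verification, sat False = falsification.\<close>

fun sat :: "bool \<Rightarrow> ('w, 'a) ncmodel \<Rightarrow> 'w \<Rightarrow> 'a fm \<Rightarrow> bool" where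
  "sat True M w (Var p) = (w \<in> Vp M p)"
| "sat False M w (Var p) = (w \<in> Vn M p)"
| "sat True M w (Conj a b) = (sat True M w a \<and> sat True M w b)"
| "sat False M w (Conj a b) = (sat False M w a \<or> sat False M w b)"
| "sat True M w (Disj a b) = (sat True M w a \<or> sat True M w b)"
| "sat False M w (Disj a b) = (sat False M w a \<and> sat False M w b)"
| "sat True M w (SNeg a) = sat False M w a"
| "sat False M w (SNeg a) = sat True M w a"
| "sat True M w (Imp a b) =
     (\<forall>v. le M w v \<longrightarrow> sat True M v a \<longrightarrow> sat True M v b)"
| "sat False M w (Imp a b) = (sat True M w a \<and> sat False M w b)"
| "sat True M w (Cond a b) =
     (\<forall>v u. le M w v \<longrightarrow>
        R M ({x. sat True M x a}, {x. sat False M x a}) v u \<longrightarrow> sat True M u b)"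
| "sat False M w (Cond a b) =
     (\<exists>u. R M ({x. sat True M x a}, {x. sat False M x a}) w u \<and> sat False M u b)"

inductive derivable :: "'a fm \<Rightarrow> bool" where
  MP: "derivable (Imp a b) \<Longrightarrow> derivable a \<Longrightarrow> derivable b"
| K: "derivable (Imp a (Imp b a))"
| S: "derivable (Imp (Imp a (Imp b c)) (Imp (Imp a b) (Imp a c)))"
| ConjE1: "derivable (Imp (Conj a b) a)"
| ConjE2: "derivable (Imp (Conj a b) b)"
| ConjI: "derivable (Imp a (Imp b (Conj a b)))"
| DisjI1: "derivable (Imp a (Disj a b))"
| DisjI2: "derivable (Imp b (Disj a b))"
| DisjE: "derivable (Imp (Imp a c) (Imp (Imp b c) (Imp (Disj a b) c)))"
| NN: "derivable (Iff (SNeg (SNeg a)) a)"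
| NConj: "derivable (Iff (SNeg (Conj a b)) (Disj (SNeg a) (SNeg b)))"
| NDisj: "derivable (Iff (SNeg (Disj a b)) (Conj (SNeg a) (SNeg b)))"
| NImp: "derivable (Iff (SNeg (Imp a b)) (Conj a (SNeg b)))"
| A1: "derivable (SIff (Conj (Cond a b) (Cond a c)) (Cond a (Conj b c)))"
| A2: "derivable (Imp (Conj (SNeg (Cond a b)) (Cond a c)) (SNeg (Cond a (Disj b (SNeg c)))))"
| A3: "derivable (Imp (Imp (Might a b) (Cond a c)) (Cond a (Imp b c)))"
| A4: "derivable (Cond a (Imp b b))"
| RA: "derivable (SIff a b) \<Longrightarrow> derivable (SIff (Cond a c) (Cond b c))"
| RC: "derivable (Iff a b) \<Longrightarrow> derivable (Iff (Cond c a) (Cond c b))"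
| RCN: "derivable (Iff (SNeg a) (SNeg b)) \<Longrightarrow>
          derivable (Iff (SNeg (Cond c a)) (SNeg (Cond c b)))"

end

theory Submission
  imports Defs
begin

lemma m_refl: "is_model M \<Longrightarrow> reflp (le M)"
  unfolding is_model_def by (elim conjE)
lemma m_trans: "is_model M \<Longrightarrow> transp (le M)"
  unfolding is_model_def by (elim conjE)
lemma m_Vp: "is_model M \<Longrightarrow> \<forall>p. upclosed (le M) (Vp M p)"
  unfolding is_model_def by (elim conjE)
lemma m_Vn: "is_model M \<Longrightarrow> \<forall>p. upclosed (le M) (Vn M p)"
  unfolding is_model_def by (elim conjE)
lemma m_c1: "is_model M \<Longrightarrow> (\<forall>X Y w w' v. le M w w' \<longrightarrow> R M (X, Y) w v \<longrightarrow>
         (\<exists>v'. le M v v' \<and> R M (X, Y) w' v'))"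
  unfolding is_model_def by (elim conjE)
lemma m_c2: "is_model M \<Longrightarrow> (\<forall>X Y w v v'. R M (X, Y) w v \<longrightarrow> le M v v' \<longrightarrow>
         (\<exists>w'. le M w w' \<and> R M (X, Y) w' v'))"
  unfolding is_model_def by (elim conjE)

lemma refl_le: "is_model M \<Longrightarrow> le M w w"
  by (rule reflpD[OF m_refl])

lemma trans_le: "is_model M \<Longrightarrow> le M u v \<Longrightarrow> le M v w \<Longrightarrow> le M u w"
  apply (rule transpD[OF m_trans])
  by assumption+

lemma c1: "is_model M \<Longrightarrow> le M w w' \<Longrightarrow> R M (X, Y) w v \<Longrightarrow> (\<exists>v'. le M v v' \<and> R M (X, Y) w' v')"
  using m_c1 by blast

lemma c2: "is_model M \<Longrightarrow> R M (X, Y) w v \<Longrightarrow> le M v v' \<Longrightarrow> (\<exists>w'. le M w w' \<and> R M (X, Y) w' v')"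
  using m_c2 by blast

lemma persist:
  assumes m: "is_model M"
  shows "le M w v \<Longrightarrow> (sat True M w phi \<longrightarrow> sat True M v phi) \<and> (sat False M w phi \<longrightarrow> sat False M v phi)"
proof (induction phi arbitrary: w v)
  case (Var x)
  have "upclosed (le M) (Vp M x)" "upclosed (le M) (Vn M x)" using m_Vp[OF m] m_Vn[OF m] by blast+
  then show ?case using Var unfolding upclosed_def by simp
next
  case (Conj phi1 phi2)
  then show ?case by simp
next
  case (Disj phi1 phi2)
  then show ?case by simp
next
  case (Imp phi1 phi2)
  show ?case
  proof
    show "sat True M w (Imp phi1 phi2) \<longrightarrow> sat True M v (Imp phi1 phi2)"
      using Imp.prems trans_le[OF m] by (simp only: sat.simps(9)) blast
    show "sat False M w (Imp phi1 phi2) \<longrightarrow> sat False M v (Imp phi1 phi2)"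
      using Imp by simp
  qed
next
  case (SNeg phi)
  then show ?case by simp
next
  case (Cond phi1 phi2)
  show ?case
  proof
    show "sat True M w (Cond phi1 phi2) \<longrightarrow> sat True M v (Cond phi1 phi2)"
      using Cond.prems trans_le[OF m] by (simp only: sat.simps(11)) blast
    show "sat False M w (Cond phi1 phi2) \<longrightarrow> sat False M v (Cond phi1 phi2)"
    proof
      assume "sat False M w (Cond phi1 phi2)"
      then obtain u where u: "R M ({x. sat True M x phi1}, {x. sat False M x phi1}) w u" "sat False M u phi2" by auto
      obtain u' where u': "le M u u'" "R M ({x. sat True M x phi1}, {x. sat False M x phi1}) v u'"
        using c1[OF m Cond.prems u(1)] by blast
      have "sat False M u' phi2" using Cond.IH(2)[OF u'(1)] u(2) by blast
      then show "sat False M v (Cond phi1 phi2)" using u'(2) by auto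
    qed
  qed
qed

lemma persT: assumes "is_model M" "le M w v" "sat True M w phi" shows "sat True M v phi"
  using assms(3) conjunct1[OF persist[OF assms(1,2)]] by (rule rev_mp)
lemma persF: assumes "is_model M" "le M w v" "sat False M w phi" shows "sat False M v phi"
  using assms(3) conjunct2[OF persist[OF assms(1,2)]] by (rule rev_mp)


lemma impI': "(\<And>v. le M w v \<Longrightarrow> sat True M v A \<Longrightarrow> sat True M v B) \<Longrightarrow> sat True M w (Imp A B)"
  by simp
lemma condI: "(\<And>v u. le M w v \<Longrightarrow> R M ({x. sat True M x a}, {x. sat False M x a}) v u \<Longrightarrow> sat True M u X) \<Longrightarrow> sat True M w (Cond a X)"
  by simp
lemma condE: "is_model M \<Longrightarrow> sat True M w (Cond a X) \<Longrightarrow> R M ({x. sat True M x a}, {x. sat False M x a}) w u \<Longrightarrow> sat True M u X"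
  using refl_le by (metis sat.simps(11))
lemma impE': "is_model M \<Longrightarrow> sat True M x (Imp a b) \<Longrightarrow> sat True M x a \<Longrightarrow> sat True M x b"
  using refl_le by (metis sat.simps(9))

lemma vK: "is_model M \<Longrightarrow> sat True M w (Imp a (Imp b a))"
  apply (rule impI', rule impI')
  by (erule persT)
lemma vS: "is_model M \<Longrightarrow> sat True M w (Imp (Imp a (Imp b c)) (Imp (Imp a b) (Imp a c)))"
  apply (clarsimp)
  by (meson refl_le trans_le)
lemma vConjI: "is_model M \<Longrightarrow> sat True M w (Imp a (Imp b (Conj a b)))"
  apply (rule impI', rule impI')
  apply (simp only: sat.simps(3))
  by (blast intro: persT[of M])
lemma vDisjE: "is_model M \<Longrightarrow> sat True M w (Imp (Imp a c) (Imp (Imp b c) (Imp (Disj a b) c)))"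
  apply clarsimp
  by (meson refl_le trans_le)
lemma vA1: "sat True M w (SIff (Conj (Cond a b) (Cond a c)) (Cond a (Conj b c)))"
  unfolding SIff_def SImp_def by auto
lemma vA2: "is_model M \<Longrightarrow> sat True M w (Imp (Conj (SNeg (Cond a b)) (Cond a c)) (SNeg (Cond a (Disj b (SNeg c)))))"
  apply clarsimp
  by (meson refl_le)

lemma vA3: assumes m: "is_model M"
  shows "sat True M w (Imp (Imp (Might a b) (Cond a c)) (Cond a (Imp b c)))"
proof (rule impI', rule condI, rule impI')
  fix v v' u u'
  let ?A = "({x. sat True M x a}, {x. sat False M x a})"
  assume h: "sat True M v (Imp (Might a b) (Cond a c))"
    and vv': "le M v v'" and r: "R M ?A v' u" and uu': "le M u u'" and bu': "sat True M u' b"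
  obtain v'' where v'': "le M v' v''" "R M ?A v'' u'" using c2[OF m r uu'] by blast
  have hv: "sat True M v'' (Imp (Might a b) (Cond a c))"
    using persT[OF m trans_le[OF m vv' v''(1)] h] .
  have "sat True M v'' (Might a b)" unfolding Might_def using v'' bu' by auto
  then have "sat True M v'' (Cond a c)" using impE'[OF m hv] by blast
  then show "sat True M u' c" using condE[OF m _ v''(2)] by blast
qed

lemma impT: "is_model M \<Longrightarrow> sat True M x (Imp a b) \<Longrightarrow> sat True M x a \<Longrightarrow> sat True M x b"
  by (rule impE')

lemma siffE: assumes m: "is_model M" and h: "sat True M x (SIff a b)"
  shows "sat True M x a = sat True M x b" "sat False M x a = sat False M x b"
proof -
  have h1: "sat True M x (Imp a b)" "sat True M x (Imp b a)"
    "sat True M x (Imp (SNeg a) (SNeg b))" "sat True M x (Imp (SNeg b) (SNeg a))"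
  proof -
    have c: "sat True M x (Conj (Conj (Imp a b) (Imp (SNeg b) (SNeg a))) (Conj (Imp b a) (Imp (SNeg a) (SNeg b))))"
      using h unfolding SIff_def SImp_def .
    show "sat True M x (Imp a b)" using c unfolding sat.simps(3) by (elim conjE)
    show "sat True M x (Imp b a)" using c unfolding sat.simps(3) by (elim conjE)
    show "sat True M x (Imp (SNeg a) (SNeg b))" using c unfolding sat.simps(3) by (elim conjE)
    show "sat True M x (Imp (SNeg b) (SNeg a))" using c unfolding sat.simps(3) by (elim conjE)
  qed
  show "sat True M x a = sat True M x b" using impT[OF m h1(1)] impT[OF m h1(2)] by (rule iffI)
  have "sat True M x (SNeg a) = sat True M x (SNeg b)" using impT[OF m h1(3)] impT[OF m h1(4)] by (rule iffI)
  then show "sat False M x a = sat False M x b" by (simp only: sat.simps(7))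
qed

lemma iffE: assumes m: "is_model M" and h: "sat True M x (Iff a b)"
  shows "sat True M x a = sat True M x b"
proof -
  have c: "sat True M x (Conj (Imp a b) (Imp b a))" using h unfolding Iff_def .
  have h11: "sat True M x (Imp a b)" using c unfolding sat.simps(3) by (elim conjE)
  have h12: "sat True M x (Imp b a)" using c unfolding sat.simps(3) by (elim conjE)
  note h1 = h11 h12
  show "sat True M x a = sat True M x b" using impT[OF m h1(1)] impT[OF m h1(2)] by (rule iffI)
qed

theorem lemma3:
  fixes phi :: "'a fm"
  assumes "derivable phi"
  shows "\<forall>(M :: ('w, 'a) ncmodel) w. is_model M \<longrightarrow> sat True M w phi"
  using assms
proof (induction phi rule: derivable.induct)
  case (MP a b)
  show ?case
  proof (intro allI impI)
    fix M :: "('w, 'a) ncmodel" and w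
    assume m: "is_model M"
    have "sat True M w (Imp a b)" "sat True M w a" using MP.IH m by auto
    then show "sat True M w b" using refl_le[OF m] by auto
  qed
next
  case (K a b)
  show ?case by (intro allI impI, rule vK)
next
  case (S a b c)
  show ?case by (intro allI impI, rule vS)
next
  case (ConjE1 a b)
  then show ?case by simp
next
  case (ConjE2 a b)
  then show ?case by simp
next
  case (ConjI a b)
  show ?case by (intro allI impI, rule vConjI)
next
  case (DisjI1 a b)
  then show ?case by simp
next
  case (DisjI2 a b)
  then show ?case by simp
next
  case (DisjE a c b)
  show ?case by (intro allI impI, rule vDisjE)
next
  case (NN a)
  then show ?case by (simp add: Iff_def)
next
  case (NConj a b)
  then show ?case by (simp add: Iff_def)
next
  case (NDisj a b)
  then show ?case by (simp add: Iff_def)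
next
  case (NImp a b)
  then show ?case by (simp add: Iff_def)
next
  case (A1 a b c)
  show ?case by (intro allI impI, rule vA1)
next
  case (A2 a b c)
  show ?case by (intro allI impI, rule vA2)
next
  case (A3 a b c)
  show ?case by (intro allI impI, rule vA3)
next
  case (A4 a b)
  then show ?case by simp
next
  case (RA a b c)
  show ?case
  proof (intro allI impI)
    fix M :: "('w, 'a) ncmodel" and w
    assume m: "is_model M"
    have h: "sat True M x (SIff a b)" for x using RA.IH m by blast
    have e1: "sat True M x a = sat True M x b" for x by (rule siffE(1)[OF m h])
    have e2: "sat False M x a = sat False M x b" for x by (rule siffE(2)[OF m h])
    show "sat True M w (SIff (Cond a c) (Cond b c))"
      by (simp add: SIff_def SImp_def e1 e2)
  qed
next
  case (RC a b c)
  show ?case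
  proof (intro allI impI)
    fix M :: "('w, 'a) ncmodel" and w
    assume m: "is_model M"
    have h: "sat True M x (Iff a b)" for x using RC.IH m by blast
    have e1: "sat True M x a = sat True M x b" for x by (rule iffE[OF m h])
    show "sat True M w (Iff (Cond c a) (Cond c b))"
      by (simp add: Iff_def e1)
  qed
next
  case (RCN a b c)
  show ?case
  proof (intro allI impI)
    fix M :: "('w, 'a) ncmodel" and w
    assume m: "is_model M"
    have h: "sat True M x (Iff (SNeg a) (SNeg b))" for x using RCN.IH m by blast
    have e0: "sat True M x (SNeg a) = sat True M x (SNeg b)" for x by (rule iffE[OF m h])
    have e1: "sat False M x a = sat False M x b" for x using e0[of x] by (simp only: sat.simps(7))
    show "sat True M w (Iff (SNeg (Cond c a)) (SNeg (Cond c b)))"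
      by (simp add: Iff_def e1)
  qed
qed

end
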